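(* Let $k\geq 2$ be an integer and $G=BS(1,k)=\langle a,t\mid tat^{-1}=a^k\rangle$. With respect to the generating set $\{a,t\}$, the conjugacy growth rate of $G$ equals the standard growth rate of $G$.
   Context: For $g\in G$, $|g|$ is the word length with respect to $\{a,t\}$; the length of a conjugacy class $[g]$ is $|[g]|=\min\{|h|: h\sim g\}$. Let $s(n)$ be the number of elements of $G$ of length $n$ and $c(n)$ the number of conjugacy classes of length $n$. The standard growth rate is $\limsup_n s(n)^{1/n}$ (equivalently the reciprocal of the radius of convergence of $\sum s(n)z^n$), and the conjugacy growth rate is $\limsup_n c(n)^{1/n}$ (the reciprocal of the radius of convergence of $\sum c(n)z^n$). *)

theory Defs
  imports Complex_Main "HOL-Library.Liminf_Limsup" "HOL-Library.Extended_Real"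
begin

text \<open>The Baumslag--Solitar group BS(1,k) = < a, t | t a t^-1 = a^k >, realised
  literally as its presentation: words over the symmetric generating set
  {a, a^-1, t, t^-1} modulo the congruence generated by free cancellation and
  the relator t a t^-1 a^-k.\<close>

datatype gen = GA | GT

type_synonym letter = "gen \<times> bool"   \<comment> \<open>(x, True) is the inverse letter x^-1\<close>
type_synonym word = "letter list"

definition inv_letter :: "letter \<Rightarrow> letter" where
  "inv_letter l = (fst l, \<not> snd l)"

definition winv :: "word \<Rightarrow> word" where
  "winv w = rev (map inv_letter w)"

definition bs_relator :: "nat \<Rightarrow> word" where
  "bs_relator k = [(GT, False), (GA, False), (GT, True)] @ replicate k (GA, True)"

inductive bs_step :: "nat \<Rightarrow> word \<Rightarrow> word \<Rightarrow> bool" for k where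
  cancel: "bs_step k (u @ [x, inv_letter x] @ v) (u @ v)"
| relator: "bs_step k (u @ bs_relator k @ v) (u @ v)"

definition bs_eq :: "nat \<Rightarrow> word \<Rightarrow> word \<Rightarrow> bool" where
  "bs_eq k = equivclp (bs_step k)"

definition bs_elem :: "nat \<Rightarrow> word \<Rightarrow> word set" where
  "bs_elem k w = {v. bs_eq k w v}"

definition bs_elements :: "nat \<Rightarrow> word set set" where
  "bs_elements k = range (bs_elem k)"

definition bs_conj_class :: "nat \<Rightarrow> word \<Rightarrow> word set" where
  "bs_conj_class k w = {v. \<exists>u. bs_eq k (u @ w @ winv u) v}"

definition bs_conj_classes :: "nat \<Rightarrow> word set set" where
  "bs_conj_classes k = range (bs_conj_class k)"

text \<open>Length of a set of words: the minimal length of a word in it.  For an element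
  this is the word length |g| w.r.t. {a,t}; for a conjugacy class it is
  min { |h| : h ~ g }.\<close>
definition min_len :: "word set \<Rightarrow> nat" where
  "min_len S = (LEAST n. \<exists>w\<in>S. length w = n)"

definition sphere_count :: "nat \<Rightarrow> nat \<Rightarrow> nat" where
  "sphere_count k n = card {g \<in> bs_elements k. min_len g = n}"

definition conj_count :: "nat \<Rightarrow> nat \<Rightarrow> nat" where
  "conj_count k n = card {C \<in> bs_conj_classes k. min_len C = n}"

definition growth_rate :: "(nat \<Rightarrow> nat) \<Rightarrow> ereal" where
  "growth_rate f = limsup (\<lambda>n. ereal (root n (real (f n))))"

end

theory Submission
  imports Defs "HOL-Real_Asymp.Real_Asymp"
begin

definition amul :: "nat \<Rightarrow> real \<times> int \<Rightarrow> real \<times> int \<Rightarrow> real \<times> int" where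
  "amul k p q = (fst p + real k powi snd p * fst q, snd p + snd q)"

definition ainv :: "nat \<Rightarrow> real \<times> int \<Rightarrow> real \<times> int" where
  "ainv k p = (- (real k powi (- snd p)) * fst p, - snd p)"

fun lval :: "letter \<Rightarrow> real \<times> int" where
  "lval (gen.GA, b) = ((if b then -1 else 1), 0)"
| "lval (gen.GT, b) = (0, (if b then -1 else 1))"

primrec phi :: "nat \<Rightarrow> word \<Rightarrow> real \<times> int" where
  "phi k [] = (0, 0)"
| "phi k (l # w) = amul k (lval l) (phi k w)"

lemma amul_assoc:
  assumes "k > 0"
  shows "amul k (amul k p q) r = amul k p (amul k q r)"
  using assms by (simp add: amul_def power_int_add algebra_simps)

lemma amul_id_left[simp]: "amul k (0,0) p = p"
  by (simp add: amul_def)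

lemma amul_id_right[simp]: "amul k p (0,0) = p"
  by (simp add: amul_def)

lemma amul_ainv_right: "k > 0 \<Longrightarrow> amul k p (ainv k p) = (0,0)"
  by (simp add: amul_def ainv_def power_int_minus field_simps)

lemma amul_ainv_left: "k > 0 \<Longrightarrow> amul k (ainv k p) p = (0,0)"
  by (simp add: amul_def ainv_def power_int_minus field_simps)

lemma phi_append: "k > 0 \<Longrightarrow> phi k (u @ v) = amul k (phi k u) (phi k v)"
  by (induction u) (simp_all add: amul_assoc)

definition aL :: letter where "aL = (gen.GA, False)"
definition aI :: letter where "aI = (gen.GA, True)"
definition tL :: letter where "tL = (gen.GT, False)"
definition tI :: letter where "tI = (gen.GT, True)"

lemma inv_letter_simps[simp]: "inv_letter aL = aI" "inv_letter aI = aL" "inv_letter tL = tI" "inv_letter tI = tL"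
  "inv_letter (inv_letter x) = x"
  by (auto simp: inv_letter_def aL_def aI_def tL_def tI_def)

lemma phi_cancel: "k > 0 \<Longrightarrow> amul k (lval x) (amul k (lval (inv_letter x)) p) = p"
proof -
  assume k: "k > 0"
  obtain g b where x: "x = (g, b)" by force
  show ?thesis using k
    by (cases g; cases b) (simp_all add: x inv_letter_def amul_def power_int_minus field_simps prod_eq_iff)
qed

lemma phi_rep_aI: "phi k (replicate n (gen.GA, True)) = (- real n, 0)"
  by (induction n) (simp_all add: amul_def)

lemma phi_relator: "k > 0 \<Longrightarrow> phi k (bs_relator k) = (0, 0)"
  by (simp add: bs_relator_def phi_append phi_rep_aI amul_def power_int_minus)

lemma phi_step: assumes "bs_step k u v" "k > 0" shows "phi k u = phi k v"
  using assms by (induction rule: bs_step.induct) (simp_all add: phi_append phi_cancel phi_relator)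

lemma phi_bs_eq: assumes "bs_eq k u v" "k > 0" shows "phi k u = phi k v"
  using assms unfolding bs_eq_def
  by (induction rule: equivclp_induct) (auto dest: phi_step)

lemma bs_eq_refl[simp]: "bs_eq k u u"
  by (simp add: bs_eq_def reflpD)

lemma bs_eq_sym[sym]: "bs_eq k u v \<Longrightarrow> bs_eq k v u"
  by (simp add: bs_eq_def equivclp_sym)

lemma bs_eq_trans[trans]: "bs_eq k u v \<Longrightarrow> bs_eq k v w \<Longrightarrow> bs_eq k u w"
  unfolding bs_eq_def by (meson transpD transp_equivclp)

lemma bs_eq_step: "bs_step k u v \<Longrightarrow> bs_eq k u v"
  unfolding bs_eq_def equivclp_def by (simp add: r_into_rtranclp symclpI(1))

lemma bs_step_ctx: "bs_step k u v \<Longrightarrow> bs_step k (p @ u @ s) (p @ v @ s)"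
proof (induction rule: bs_step.induct)
  case (cancel u x v)
  show ?case using bs_step.cancel[of k "p @ u" x "v @ s"] by simp
next
  case (relator u v)
  show ?case using bs_step.relator[of k "p @ u" "v @ s"] by simp
qed

lemma bs_eq_ctx: "bs_eq k u v \<Longrightarrow> bs_eq k (p @ u @ s) (p @ v @ s)"
  unfolding bs_eq_def
proof (induction rule: equivclp_induct)
  case base
  then show ?case by (simp add: reflpD)
next
  case (step y z)
  then have "equivclp (bs_step k) (p @ y @ s) (p @ z @ s)"
    using bs_step_ctx[of k y z p s] bs_step_ctx[of k z y p s]
    by (metis bs_eq_def bs_eq_step bs_eq_sym)
  then show ?case using step(3) by (meson transpD transp_equivclp)
qed

lemma bs_eq_ctxL: "bs_eq k u v \<Longrightarrow> bs_eq k (p @ u) (p @ v)"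
  using bs_eq_ctx[of k u v p "[]"] by simp

lemma bs_eq_ctxR: "bs_eq k u v \<Longrightarrow> bs_eq k (u @ s) (v @ s)"
  using bs_eq_ctx[of k u v "[]" s] by simp

lemma bs_eq_app: "bs_eq k u v \<Longrightarrow> bs_eq k u' v' \<Longrightarrow> bs_eq k (u @ u') (v @ v')"
  by (meson bs_eq_ctxL bs_eq_ctxR bs_eq_trans)

lemma bs_cancel: "bs_eq k (u @ [x, inv_letter x] @ v) (u @ v)"
  by (rule bs_eq_step) (rule bs_step.cancel)

lemma bs_cancel0: "bs_eq k [x, inv_letter x] []"
  using bs_cancel[of k "[]" x "[]"] by simp

lemma rep_cancel: "bs_eq k (replicate n x @ replicate n (inv_letter x)) []"
proof (induction n)
  case 0 then show ?case by simp
next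
  case (Suc n)
  have "replicate (Suc n) x @ replicate (Suc n) (inv_letter x)
      = replicate n x @ [x, inv_letter x] @ replicate n (inv_letter x)"
    by (simp add: replicate_append_same[symmetric])
  also have "bs_eq k \<dots> (replicate n x @ replicate n (inv_letter x))" by (rule bs_cancel)
  finally show ?case using Suc by (rule bs_eq_trans)
qed

lemma rep_cancel_gen: "bs_eq k (replicate a x @ replicate b (inv_letter x))
   (if b \<le> a then replicate (a - b) x else replicate (b - a) (inv_letter x))"
proof (cases "b \<le> a")
  case True
  have "replicate a x @ replicate b (inv_letter x) = replicate (a-b) x @ (replicate b x @ replicate b (inv_letter x)) @ []"
    using True by (simp add: replicate_add[symmetric])
  also have "bs_eq k \<dots> (replicate (a-b) x @ [] @ [])" by (rule bs_eq_ctx) (rule rep_cancel)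
  finally show ?thesis using True by simp
next
  case False
  have "replicate a x @ replicate b (inv_letter x) = [] @ (replicate a x @ replicate a (inv_letter x)) @ replicate (b-a) (inv_letter x)"
    using False by (simp add: replicate_add[symmetric])
  also have "bs_eq k \<dots> ([] @ [] @ replicate (b-a) (inv_letter x))" by (rule bs_eq_ctx) (rule rep_cancel)
  finally show ?thesis using False by simp
qed

definition pw :: "letter \<Rightarrow> int \<Rightarrow> word" where
  "pw x n = (if 0 \<le> n then replicate (nat n) x else replicate (nat (- n)) (inv_letter x))"

lemma pw_nat: "pw x (int n) = replicate n x"
  by (simp add: pw_def)

lemma pw_neg_nat: "pw x (- int n) = replicate n (inv_letter x)"
  unfolding pw_def by (cases "n = 0") auto

lemma length_pw: "length (pw x n) = nat \<bar>n\<bar>"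
  by (simp add: pw_def)

lemma pw_add: "bs_eq k (pw x m @ pw x n) (pw x (m + n))"
proof (cases "0 \<le> m")
  case m: True
  show ?thesis
  proof (cases "0 \<le> n")
    case True
    then show ?thesis using m by (simp add: pw_def replicate_add[symmetric] nat_add_distrib)
  next
    case False
    have "bs_eq k (pw x m @ pw x n) (if nat (-n) \<le> nat m then replicate (nat m - nat (-n)) x else replicate (nat (-n) - nat m) (inv_letter x))"
      using m False rep_cancel_gen[of k "nat m" x "nat (-n)"] by (simp add: pw_def)
    also have "\<dots> = pw x (m + n)" using m False by (auto simp: pw_def nat_diff_distrib)
    finally show ?thesis .
  qed
next
  case m: False
  show ?thesis
  proof (cases "0 \<le> n")
    case True
    have "bs_eq k (pw x m @ pw x n) (if nat n \<le> nat (-m) then replicate (nat (-m) - nat n) (inv_letter x) else replicate (nat n - nat (-m)) (inv_letter (inv_letter x)))"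
      using m True rep_cancel_gen[of k "nat (-m)" "inv_letter x" "nat n"] by (simp add: pw_def)
    also have "\<dots> = pw x (m + n)" using m True by (auto simp: pw_def nat_diff_distrib)
    finally show ?thesis .
  next
    case False
    then show ?thesis using m by (simp add: pw_def replicate_add[symmetric] nat_add_distrib[symmetric])
  qed
qed

lemma bs_ins: "bs_eq k (u @ v) (u @ [x, inv_letter x] @ v)"
  by (rule bs_eq_sym) (rule bs_cancel)

lemma rel_a: "bs_eq k [tL, aL, tI] (replicate k aL)"
proof -
  have "[tL, aL, tI] = [tL, aL, tI] @ [] @ []" by simp
  also have "bs_eq k \<dots> ([tL, aL, tI] @ (replicate k aI @ replicate k (inv_letter aI)) @ [])"
    by (rule bs_eq_ctx, rule bs_eq_sym, rule rep_cancel)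
  also have "\<dots> = [] @ bs_relator k @ replicate k aL"
    by (simp add: bs_relator_def aL_def aI_def tL_def tI_def inv_letter_def)
  also have "bs_eq k \<dots> ([] @ replicate k aL)" by (rule bs_eq_step, rule bs_step.relator)
  finally show ?thesis by simp
qed

lemma rel_aI: "bs_eq k [tL, aI, tI] (replicate k aI)"
proof -
  have "[tL, aI, tI] = [tL, aI, tI] @ [] @ []" by simp
  also have "bs_eq k \<dots> ([tL, aI, tI] @ (replicate k aL @ replicate k (inv_letter aL)) @ [])"
    by (rule bs_eq_ctx, rule bs_eq_sym, rule rep_cancel)
  also have "\<dots> = [tL, aI, tI] @ replicate k aL @ replicate k aI" by simp
  also have "bs_eq k \<dots> ([tL, aI, tI] @ [tL, aL, tI] @ replicate k aI)"
    by (rule bs_eq_ctx, rule bs_eq_sym, rule rel_a)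
  also have "\<dots> = [tL, aI] @ [tI, inv_letter tI] @ [aL, tI] @ replicate k aI" by simp
  also have "bs_eq k \<dots> ([tL, aI] @ [aL, tI] @ replicate k aI)" by (rule bs_cancel)
  also have "\<dots> = [tL] @ [aI, inv_letter aI] @ [tI] @ replicate k aI" by simp
  also have "bs_eq k \<dots> ([tL] @ [tI] @ replicate k aI)" by (rule bs_cancel)
  also have "\<dots> = [] @ [tL, inv_letter tL] @ replicate k aI" by simp
  also have "bs_eq k \<dots> ([] @ replicate k aI)" by (rule bs_cancel)
  finally show ?thesis by simp
qed

lemma tconj_rep:
  assumes rel: "bs_eq k [tL, y, tI] (replicate k y)"
  shows "bs_eq k ([tL] @ replicate n y @ [tI]) (replicate (k * n) y)"
proof (induction n)
  case 0
  have "[tL] @ replicate 0 y @ [tI] = [] @ [tL, inv_letter tL] @ []" by simp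
  also have "bs_eq k \<dots> ([] @ [])" by (rule bs_cancel)
  finally show ?case by simp
next
  case (Suc n)
  have "[tL] @ replicate (Suc n) y @ [tI] = ([tL] @ replicate n y) @ [y, tI]"
    by (simp add: replicate_append_same[symmetric])
  also have "bs_eq k \<dots> (([tL] @ replicate n y) @ [tI, inv_letter tI] @ [y, tI])" by (rule bs_ins)
  also have "\<dots> = ([tL] @ replicate n y @ [tI]) @ [tL, y, tI]" by simp
  also have "bs_eq k \<dots> (replicate (k * n) y @ replicate k y)"
    by (rule bs_eq_app[OF Suc rel])
  also have "\<dots> = replicate (k * Suc n) y" by (simp add: replicate_add[symmetric])
  finally show ?case .
qed

lemma tconj_pw: "bs_eq k ([tL] @ pw aL p @ [tI]) (pw aL (int k * p))"
proof (cases "0 \<le> p")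
  case True
  then obtain n where p: "p = int n" by (metis nonneg_eq_int)
  show ?thesis using tconj_rep[where k=k and y=aL and n=n, OF rel_a] by (simp add: p pw_nat flip: of_nat_mult)
next
  case False
  then obtain n where p: "p = - int n" by (metis neg_int_cases le_less not_le of_nat_Suc)
  show ?thesis using tconj_rep[where k=k and y=aI and n=n, OF rel_aI]
    by (simp add: p pw_neg_nat flip: of_nat_mult)
qed

definition NF :: "nat \<Rightarrow> int \<Rightarrow> int \<Rightarrow> word" where
  "NF e p m = replicate e tI @ pw aL p @ replicate e tL @ pw tL m"

lemma NF_lift1: "bs_eq k (NF e p m) (NF (Suc e) (int k * p) m)"
proof -
  have "NF e p m = replicate e tI @ (pw aL p @ replicate e tL @ pw tL m)" by (simp add: NF_def)
  also have "bs_eq k \<dots> (replicate e tI @ [tI, inv_letter tI] @ (pw aL p @ replicate e tL @ pw tL m))"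
    by (rule bs_ins)
  also have "\<dots> = (replicate e tI @ [tI] @ [tL] @ pw aL p) @ (replicate e tL @ pw tL m)" by simp
  also have "bs_eq k \<dots> ((replicate e tI @ [tI] @ [tL] @ pw aL p) @ [tI, inv_letter tI] @ (replicate e tL @ pw tL m))"
    by (rule bs_ins)
  also have "\<dots> = (replicate e tI @ [tI]) @ ([tL] @ pw aL p @ [tI]) @ ([tL] @ replicate e tL @ pw tL m)" by simp
  also have "bs_eq k \<dots> ((replicate e tI @ [tI]) @ pw aL (int k * p) @ ([tL] @ replicate e tL @ pw tL m))"
    by (rule bs_eq_ctx, rule tconj_pw)
  also have "\<dots> = NF (Suc e) (int k * p) m"
    by (simp add: NF_def replicate_append_same)
  finally show ?thesis .
qed

lemma NF_lift: "bs_eq k (NF e p m) (NF (e + d) (int k ^ d * p) m)"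
proof (induction d)
  case 0 then show ?case by simp
next
  case (Suc d)
  then show ?case using NF_lift1[of k "e + d" "int k ^ d * p" m]
    by (simp add: mult.assoc bs_eq_trans)
qed

lemma aL_NF: "bs_eq k [aL] (NF e (int k ^ e) 0)"
proof -
  have "[aL] = NF 0 1 0" by (simp add: NF_def pw_def)
  then show ?thesis using NF_lift[of k 0 1 0 e] by simp
qed

lemma aI_NF: "bs_eq k [aI] (NF e (- (int k ^ e)) 0)"
proof -
  have "[aI] = NF 0 (-1) 0" by (simp add: NF_def pw_def)
  then show ?thesis using NF_lift[of k 0 "-1" 0 e] by simp
qed

lemma tt_cancel: "bs_eq k (replicate e tL @ replicate e tI) []"
  using rep_cancel[of k e tL] by simp

lemma prepend_a:
  assumes "x = aL \<or> x = aI"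
  shows "bs_eq k (x # NF e p m) (NF e (p + (if x = aL then 1 else -1) * int k ^ e) m)"
proof -
  define q where "q = (if x = aL then 1 else -1) * int k ^ e"
  have xq: "bs_eq k [x] (NF e q 0)" using assms aL_NF aI_NF unfolding q_def
    by (auto simp: aL_def aI_def)
  have "x # NF e p m = [x] @ NF e p m" by simp
  also have "bs_eq k \<dots> (NF e q 0 @ NF e p m)" by (rule bs_eq_ctxR[OF xq])
  also have "\<dots> = (replicate e tI @ pw aL q) @ (replicate e tL @ replicate e tI) @ (pw aL p @ replicate e tL @ pw tL m)"
    by (simp add: NF_def pw_def)
  also have "bs_eq k \<dots> ((replicate e tI @ pw aL q) @ [] @ (pw aL p @ replicate e tL @ pw tL m))"
    by (rule bs_eq_ctx, rule tt_cancel)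
  also have "\<dots> = replicate e tI @ (pw aL q @ pw aL p) @ (replicate e tL @ pw tL m)" by simp
  also have "bs_eq k \<dots> (replicate e tI @ pw aL (q + p) @ (replicate e tL @ pw tL m))"
    by (rule bs_eq_ctx, rule pw_add)
  finally show ?thesis by (simp add: NF_def q_def add.commute)
qed

lemma pw_rep_eq: "bs_eq k (replicate e tL @ pw tL m) (pw tL (int e + m))"
  using pw_add[of k tL "int e" m] by (simp add: pw_nat)

lemma prepend_tI: "bs_eq k (tI # NF e p m) (NF (Suc e) p (m - 1))"
proof -
  have "tI # NF e p m = (replicate (Suc e) tI @ pw aL p) @ (replicate e tL @ pw tL m) @ []"
    by (simp add: NF_def)
  also have "bs_eq k \<dots> ((replicate (Suc e) tI @ pw aL p) @ (pw tL (int (Suc e) + (m - 1))) @ [])"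
    by (rule bs_eq_ctx) (use pw_rep_eq[of k e m] in simp)
  also have "bs_eq k \<dots> ((replicate (Suc e) tI @ pw aL p) @ (replicate (Suc e) tL @ pw tL (m - 1)) @ [])"
    by (rule bs_eq_ctx, rule bs_eq_sym, rule pw_rep_eq)
  finally show ?thesis by (simp add: NF_def)
qed

lemma prepend_tL: "bs_eq k (tL # NF e p m) (NF e (int k * p) (m + 1))"
proof -
  have "tL # NF e p m = [tL] @ NF e p m" by simp
  also have "bs_eq k \<dots> ([tL] @ NF (Suc e) (int k * p) m)" by (rule bs_eq_ctxL, rule NF_lift1)
  also have "\<dots> = [] @ [tL, inv_letter tL] @ (replicate e tI @ pw aL (int k * p) @ (replicate (Suc e) tL @ pw tL m))"
    by (simp add: NF_def)
  also have "bs_eq k \<dots> ([] @ (replicate e tI @ pw aL (int k * p) @ (replicate (Suc e) tL @ pw tL m)))"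
    by (rule bs_cancel)
  also have "\<dots> = (replicate e tI @ pw aL (int k * p)) @ (replicate (Suc e) tL @ pw tL m) @ []" by simp
  also have "bs_eq k \<dots> ((replicate e tI @ pw aL (int k * p)) @ pw tL (int (Suc e) + m) @ [])"
    by (rule bs_eq_ctx, rule pw_rep_eq)
  also have "bs_eq k \<dots> ((replicate e tI @ pw aL (int k * p)) @ (replicate e tL @ pw tL (m + 1)) @ [])"
    by (rule bs_eq_ctx, rule bs_eq_sym) (use pw_rep_eq[of k e "m+1"] in \<open>simp add: ac_simps\<close>)
  finally show ?thesis by (simp add: NF_def)
qed

lemma exists_NF: "\<exists>e p m. bs_eq k w (NF e p m)"
proof (induction w)
  case Nil
  have "NF 0 0 0 = []" by (simp add: NF_def pw_def)
  then show ?case by (metis bs_eq_refl)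
next
  case (Cons x w)
  then obtain e p m where IH: "bs_eq k w (NF e p m)" by blast
  have c: "bs_eq k (x # w) (x # NF e p m)" using bs_eq_ctxL[OF IH, of "[x]"] by simp
  obtain g b where x: "x = (g, b)" by force
  show ?case
  proof (cases g)
    case GA
    then have "x = aL \<or> x = aI" using x by (cases b) (auto simp: aL_def aI_def)
    then show ?thesis using c prepend_a[of x k e p m] by (meson bs_eq_trans)
  next
    case GT
    then have "x = tL \<or> x = tI" using x by (cases b) (auto simp: tL_def tI_def)
    then show ?thesis using c prepend_tL[of k e p m] prepend_tI[of k e p m] by (meson bs_eq_trans)
  qed
qed

lemma phi_rep_aL: "phi k (replicate n aL) = (real n, 0)"
  by (induction n) (simp_all add: amul_def aL_def)

lemma phi_rep_aI': "phi k (replicate n aI) = (- real n, 0)"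
  by (induction n) (simp_all add: amul_def aI_def)

lemma phi_rep_tL: "phi k (replicate n tL) = (0, int n)"
  by (induction n) (simp_all add: amul_def tL_def)

lemma phi_rep_tI: "phi k (replicate n tI) = (0, - int n)"
  by (induction n) (simp_all add: amul_def tI_def)

lemma phi_pw_aL: "phi k (pw aL p) = (of_int p, 0)"
  by (simp add: pw_def phi_rep_aL phi_rep_aI')

lemma phi_pw_tL: "phi k (pw tL m) = (0, m)"
  by (simp add: pw_def phi_rep_tL phi_rep_tI)

lemma phi_NF: "k > 0 \<Longrightarrow> phi k (NF e p m) = (of_int p / real k ^ e, m)"
  by (simp add: NF_def phi_append phi_pw_aL phi_pw_tL phi_rep_tL phi_rep_tI amul_def
      power_int_minus divide_inverse)

lemma faithful:
  assumes k: "k > 0" and eq: "phi k u = phi k v"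
  shows "bs_eq k u v"
proof -
  obtain e1 p1 m1 where u: "bs_eq k u (NF e1 p1 m1)" using exists_NF by blast
  obtain e2 p2 m2 where v: "bs_eq k v (NF e2 p2 m2)" using exists_NF by blast
  have pu: "phi k u = (of_int p1 / real k ^ e1, m1)" using phi_bs_eq[OF u k] phi_NF[OF k] by simp
  have pv: "phi k v = (of_int p2 / real k ^ e2, m2)" using phi_bs_eq[OF v k] phi_NF[OF k] by simp
  have m: "m1 = m2" using eq pu pv by simp
  have "of_int p1 / real k ^ e1 = of_int p2 / real k ^ e2" using eq pu pv by simp
  then have "of_int p1 * real k ^ e2 = of_int p2 * real k ^ e1" using k by (simp add: field_simps)
  then have "real_of_int (int k ^ e2 * p1) = real_of_int (int k ^ e1 * p2)" by (simp add: ac_simps)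
  then have pe: "int k ^ e2 * p1 = int k ^ e1 * p2" by (simp only: of_int_eq_iff)
  have "bs_eq k u (NF (e1 + e2) (int k ^ e2 * p1) m1)" using u NF_lift bs_eq_trans by blast
  moreover have "bs_eq k v (NF (e2 + e1) (int k ^ e1 * p2) m2)" using v NF_lift bs_eq_trans by blast
  ultimately show ?thesis using pe m by (metis add.commute bs_eq_sym bs_eq_trans)
qed

lemma bs_eq_iff: "k > 0 \<Longrightarrow> bs_eq k u v \<longleftrightarrow> phi k u = phi k v"
  using faithful phi_bs_eq by blast

lemma winv_Cons: "winv (x # u) = winv u @ [inv_letter x]"
  by (simp add: winv_def)

lemma winv_cancel: "bs_eq k (u @ winv u) []"
proof (induction u)
  case Nil then show ?case by (simp add: winv_def)
next
  case (Cons x u)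
  have "(x # u) @ winv (x # u) = [x] @ (u @ winv u) @ [inv_letter x]" by (simp add: winv_Cons)
  also have "bs_eq k \<dots> ([x] @ [] @ [inv_letter x])" by (rule bs_eq_ctx[OF Cons])
  also have "bs_eq k \<dots> []" using bs_cancel0 by simp
  finally show ?case .
qed

lemma ainv_unique: "k > 0 \<Longrightarrow> amul k a b = (0,0) \<Longrightarrow> b = ainv k a"
proof -
  assume k: "k > 0" and ab: "amul k a b = (0,0)"
  have "b = amul k (amul k (ainv k a) a) b" using amul_ainv_left[OF k] by simp
  also have "\<dots> = amul k (ainv k a) (amul k a b)" by (rule amul_assoc[OF k])
  also have "\<dots> = ainv k a" using ab by simp
  finally show ?thesis .
qed

lemma phi_winv: "k > 0 \<Longrightarrow> phi k (winv u) = ainv k (phi k u)"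
  using phi_bs_eq[OF winv_cancel] phi_append ainv_unique by (metis phi.simps(1))

definition conjp :: "nat \<Rightarrow> real \<times> int \<Rightarrow> real \<times> int \<Rightarrow> real \<times> int" where
  "conjp k g h = amul k (amul k g h) (ainv k g)"

lemma phi_conj: "k > 0 \<Longrightarrow> phi k (u @ w @ winv u) = conjp k (phi k u) (phi k w)"
  by (simp add: phi_append phi_winv conjp_def amul_assoc)

lemma ainv_amul: "k > 0 \<Longrightarrow> ainv k (amul k g h) = amul k (ainv k h) (ainv k g)"
proof -
  assume k: "k > 0"
  have "amul k (amul k g h) (amul k (ainv k h) (ainv k g)) = (0,0)"
    by (simp add: amul_assoc[OF k] amul_ainv_right[OF k] flip: amul_assoc[OF k, of h])
  then show ?thesis using ainv_unique[OF k] by simp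
qed

lemma conjp_comp: "k > 0 \<Longrightarrow> conjp k g (conjp k h x) = conjp k (amul k g h) x"
  by (simp add: conjp_def ainv_amul amul_assoc)

lemma ainv_zero[simp]: "ainv k (0,0) = (0,0)"
  by (simp add: ainv_def)

lemma conjp_id[simp]: "conjp k (0,0) x = x"
  by (simp add: conjp_def)

lemma conjp_inv: "k > 0 \<Longrightarrow> conjp k (ainv k g) (conjp k g x) = x"
  by (simp add: conjp_comp amul_ainv_left)

lemma snd_conjp: "snd (conjp k g h) = snd h"
  by (simp add: conjp_def amul_def ainv_def)

lemma elem_phi: "k > 0 \<Longrightarrow> bs_elem k w = {v. phi k v = phi k w}"
  by (auto simp: bs_elem_def bs_eq_iff)

lemma class_phi: "k > 0 \<Longrightarrow> bs_conj_class k w = {v. \<exists>u. phi k v = conjp k (phi k u) (phi k w)}"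
  by (auto simp: bs_conj_class_def bs_eq_iff phi_conj) metis

lemma class_self: "k > 0 \<Longrightarrow> w \<in> bs_conj_class k w"
  using class_phi[of k w] by (auto intro!: exI[of _ "[]"])

lemma class_eq:
  assumes k: "k > 0" and w: "w \<in> bs_conj_class k w0"
  shows "bs_conj_class k w = bs_conj_class k w0"
proof -
  obtain u0 where u0: "phi k w = conjp k (phi k u0) (phi k w0)" using w class_phi[OF k] by auto
  show ?thesis
  proof (intro set_eqI iffI)
    fix v assume "v \<in> bs_conj_class k w"
    then obtain u where "phi k v = conjp k (phi k u) (phi k w)" using class_phi[OF k] by auto
    then have "phi k v = conjp k (phi k (u @ u0)) (phi k w0)" by (simp add: u0 conjp_comp[OF k] phi_append[OF k])
    then show "v \<in> bs_conj_class k w0" using class_phi[OF k] by auto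
  next
    fix v assume "v \<in> bs_conj_class k w0"
    then obtain u where "phi k v = conjp k (phi k u) (phi k w0)" using class_phi[OF k] by auto
    moreover have "phi k w0 = conjp k (phi k (winv u0)) (phi k w)" by (simp add: u0 phi_winv[OF k] conjp_inv[OF k])
    ultimately have "phi k v = conjp k (phi k (u @ winv u0)) (phi k w)" by (simp add: conjp_comp[OF k] phi_append[OF k])
    then show "v \<in> bs_conj_class k w" using class_phi[OF k] by auto
  qed
qed

lemma elem_sub_class: "k > 0 \<Longrightarrow> w \<in> bs_conj_class k w0 \<Longrightarrow> bs_elem k w \<subseteq> bs_conj_class k w0"
proof
  fix v assume k: "k > 0" and w: "w \<in> bs_conj_class k w0" and "v \<in> bs_elem k w"
  then have "phi k v = conjp k (phi k []) (phi k w)" using elem_phi[OF k] by simp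
  then have "v \<in> bs_conj_class k w" using class_phi[OF k] by blast
  then show "v \<in> bs_conj_class k w0" using class_eq[OF k w] by simp
qed

definition lsgn :: "bool \<Rightarrow> int" where "lsgn b = (if b then -1 else 1)"

primrec dig :: "word \<Rightarrow> int \<Rightarrow> int" where
  "dig [] = (\<lambda>h. 0)"
| "dig (l # w) = (if fst l = gen.GA then (\<lambda>h. dig w h + (if h = 0 then lsgn (snd l) else 0))
                  else (\<lambda>h. dig w (h - lsgn (snd l))))"

primrec lo :: "word \<Rightarrow> int" where
  "lo [] = 0"
| "lo (l # w) = (if fst l = gen.GA then lo w else min 0 (lo w + lsgn (snd l)))"

primrec hi :: "word \<Rightarrow> int" where
  "hi [] = 0"
| "hi (l # w) = (if fst l = gen.GA then hi w else max 0 (hi w + lsgn (snd l)))"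

definition acount :: "word \<Rightarrow> nat" where "acount w = length (filter (\<lambda>l. fst l = gen.GA) w)"
definition tcount :: "word \<Rightarrow> nat" where "tcount w = length (filter (\<lambda>l. fst l \<noteq> gen.GA) w)"

lemma acount_Cons: "acount (l # w) = (if fst l = gen.GA then Suc (acount w) else acount w)"
  by (simp add: acount_def)
lemma tcount_Cons: "tcount (l # w) = (if fst l = gen.GA then tcount w else Suc (tcount w))"
  by (simp add: tcount_def)

lemma length_at: "length w = acount w + tcount w"
  unfolding acount_def tcount_def by (metis sum_length_filter_compl)

lemma lo_le0: "lo w \<le> 0" by (induction w) auto
lemma hi_ge0: "0 \<le> hi w" by (induction w) auto

lemma lsgn_abs[simp]: "\<bar>lsgn b\<bar> = 1" by (simp add: lsgn_def)

lemma span: "hi w - lo w \<le> int (tcount w)"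
proof (induction w)
  case Nil then show ?case by simp
next
  case (Cons l w)
  have "\<bar>lsgn (snd l)\<bar> = 1" by simp
  then show ?case using Cons lo_le0[of w] hi_ge0[of w] by (auto simp: tcount_Cons abs_if split: if_splits)
qed

lemma dig_supp: "dig w h \<noteq> 0 \<Longrightarrow> lo w \<le> h \<and> h \<le> hi w"
proof (induction w arbitrary: h)
  case Nil then show ?case by simp
next
  case (Cons l w)
  show ?case
  proof (cases "fst l = gen.GA")
    case True
    then show ?thesis using Cons lo_le0[of w] hi_ge0[of w] by (auto split: if_splits)
  next
    case False
    then have "dig w (h - lsgn (snd l)) \<noteq> 0" using Cons.prems by simp
    then have "lo w \<le> h - lsgn (snd l) \<and> h - lsgn (snd l) \<le> hi w" using Cons.IH by blast
    then show ?thesis using False by auto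
  qed
qed

lemma shift_cover:
  assumes "{lo (l # w)..hi (l # w)} \<subseteq> S" "fst l \<noteq> gen.GA"
  shows "{lo w..hi w} \<subseteq> (\<lambda>h. h - lsgn (snd l)) ` S"
proof
  fix x assume x: "x \<in> {lo w..hi w}"
  have "x + lsgn (snd l) \<in> {lo (l # w)..hi (l # w)}" using x assms(2) by auto
  then have "x + lsgn (snd l) \<in> S" using assms(1) by blast
  then show "x \<in> (\<lambda>h. h - lsgn (snd l)) ` S" by (metis add_diff_cancel_right' image_eqI)
qed

lemma dig_abs_sum:
  "finite S \<Longrightarrow> {lo w..hi w} \<subseteq> S \<Longrightarrow> (\<Sum>h\<in>S. \<bar>dig w h\<bar>) \<le> int (acount w)"
proof (induction w arbitrary: S)
  case Nil then show ?case by simp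
next
  case (Cons l w)
  show ?case
  proof (cases "fst l = gen.GA")
    case True
    have cov: "{lo w..hi w} \<subseteq> S" using Cons.prems True by simp
    have z: "0 \<in> S" using cov lo_le0[of w] hi_ge0[of w] by auto
    have "(\<Sum>h\<in>S. \<bar>dig (l # w) h\<bar>) \<le> (\<Sum>h\<in>S. \<bar>dig w h\<bar> + (if h = 0 then 1 else 0))"
      using True by (intro sum_mono) (auto simp: lsgn_def)
    also have "\<dots> = (\<Sum>h\<in>S. \<bar>dig w h\<bar>) + 1"
      using Cons.prems(1) z by (simp add: sum.distrib)
    also have "\<dots> \<le> int (acount w) + 1" using Cons.IH[OF Cons.prems(1) cov] by simp
    finally show ?thesis using True by (simp add: acount_Cons)
  next
    case False
    define f where "f = (\<lambda>h::int. h - lsgn (snd l))"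
    have inj: "inj_on f S" unfolding f_def by (simp add: inj_on_def)
    have "(\<Sum>h\<in>S. \<bar>dig (l # w) h\<bar>) = (\<Sum>h\<in>S. \<bar>dig w (f h)\<bar>)" using False by (simp add: f_def)
    also have "\<dots> = (\<Sum>h\<in>f ` S. \<bar>dig w h\<bar>)" using sum.reindex[OF inj, of "\<lambda>h. \<bar>dig w h\<bar>"] by simp
    also have "\<dots> \<le> int (acount w)"
      using Cons.IH[of "f ` S"] Cons.prems shift_cover[of l w S] False by (simp add: f_def)
    finally show ?thesis using False by (simp add: acount_Cons)
  qed
qed

lemma phi_dig:
  assumes k: "k > 0"
  shows "finite S \<Longrightarrow> {lo w..hi w} \<subseteq> S \<Longrightarrow> fst (phi k w) = (\<Sum>h\<in>S. of_int (dig w h) * real k powi h)"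
proof (induction w arbitrary: S)
  case Nil then show ?case by simp
next
  case (Cons l w)
  show ?case
  proof (cases "fst l = gen.GA")
    case True
    have cov: "{lo w..hi w} \<subseteq> S" using Cons.prems True by simp
    have z: "0 \<in> S" using cov lo_le0[of w] hi_ge0[of w] by auto
    obtain b where l: "l = (gen.GA, b)" using True by (metis prod.collapse)
    have "(\<Sum>h\<in>S. of_int (dig (l # w) h) * real k powi h)
        = (\<Sum>h\<in>S. of_int (dig w h) * real k powi h + (if h = 0 then of_int (lsgn (snd l)) else 0))"
      using True by (intro sum.cong) (auto simp: distrib_right)
    also have "\<dots> = (\<Sum>h\<in>S. of_int (dig w h) * real k powi h) + (\<Sum>h\<in>S. (if h = 0 then of_int (lsgn (snd l)) else 0))"
      by (simp add: sum.distrib)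
    also have "\<dots> = fst (phi k w) + of_int (lsgn (snd l))"
      using Cons.IH[OF Cons.prems(1) cov] Cons.prems(1) z by simp
    finally show ?thesis using l by (simp add: amul_def lsgn_def)
  next
    case False
    define f where "f = (\<lambda>h::int. h - lsgn (snd l))"
    have inj: "inj_on f S" unfolding f_def by (simp add: inj_on_def)
    obtain b where l: "l = (gen.GT, b)" using False by (metis gen.exhaust prod.collapse)
    have "(\<Sum>h\<in>S. of_int (dig (l # w) h) * real k powi h)
        = (\<Sum>h\<in>S. real k powi lsgn (snd l) * (of_int (dig w (f h)) * real k powi (f h)))"
      using False k by (intro sum.cong) (simp_all add: f_def flip: power_int_add)
    also have "\<dots> = real k powi lsgn (snd l) * (\<Sum>h\<in>S. of_int (dig w (f h)) * real k powi (f h))"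
      by (simp add: sum_distrib_left)
    also have "(\<Sum>h\<in>S. of_int (dig w (f h)) * real k powi (f h)) = (\<Sum>h\<in>f ` S. of_int (dig w h) * real k powi h)"
      using sum.reindex[OF inj, of "\<lambda>h. of_int (dig w h) * real k powi h"] by simp
    also have "\<dots> = fst (phi k w)"
      using Cons.IH[of "f ` S"] Cons.prems shift_cover[of l w S] False by (simp add: f_def)
    finally show ?thesis using l by (simp add: amul_def lsgn_def)
  qed
qed

lemma abs_snd_phi: "\<bar>snd (phi k w)\<bar> \<le> int (length w)"
proof (induction w)
  case Nil then show ?case by simp
next
  case (Cons l w)
  obtain g b where "l = (g, b)" by force
  then show ?case using Cons by (cases g) (auto simp: amul_def)
qed

definition Dw :: "word \<Rightarrow> nat" where "Dw w = nat (hi w - lo w)"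

definition Xv :: "nat \<Rightarrow> word \<Rightarrow> int" where
  "Xv k w = (\<Sum>j<Suc (Dw w). dig w (lo w + int j) * int k ^ j)"

definition dw :: "word \<Rightarrow> word" where
  "dw w = concat (map (\<lambda>j. pw aL (dig w (lo w + int j)) @ [tL]) [0..<Suc (Dw w)])"

lemma phi_blocks:
  assumes k: "k > 0"
  shows "phi k (concat (map (\<lambda>j. pw aL (d j) @ [tL]) [0..<N])) = (\<Sum>j<N. of_int (d j) * real k ^ j, int N)"
proof (induction N)
  case 0 then show ?case by simp
next
  case (Suc N)
  have "phi k (pw aL (d N) @ [tL]) = (of_int (d N), 1)"
    by (simp add: phi_append[OF k] phi_pw_aL amul_def tL_def)
  then show ?case using Suc by (simp add: phi_append[OF k] amul_def power_int_of_nat)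
qed

lemma length_blocks:
  "length (concat (map (\<lambda>j. pw aL (d j) @ [tL]) [0..<N])) = (\<Sum>j<N. nat \<bar>d j\<bar> + 1)"
  by (induction N) (simp_all add: length_pw)

lemma phi_dw: assumes k: "k > 0" shows "phi k (dw w) = (of_int (Xv k w), int (Dw w) + 1)"
proof -
  have "phi k (dw w) = (\<Sum>j<Suc (Dw w). of_int (dig w (lo w + int j)) * real k ^ j, int (Suc (Dw w)))"
    unfolding dw_def by (rule phi_blocks[OF k])
  then show ?thesis by (simp add: Xv_def del: sum.lessThan_Suc)
qed

definition Sw :: "word \<Rightarrow> int set" where "Sw w = (\<lambda>j. lo w + int j) ` {..<Suc (Dw w)}"

lemma Sw_cover: "{lo w..hi w} \<subseteq> Sw w"
proof
  fix h assume h: "h \<in> {lo w..hi w}"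
  then have "nat (h - lo w) < Suc (Dw w)" by (auto simp: Dw_def)
  moreover have "h = lo w + int (nat (h - lo w))" using h by auto
  ultimately show "h \<in> Sw w" unfolding Sw_def by blast
qed

lemma Sw_inj: "inj_on (\<lambda>j. lo w + int j) A"
  by (simp add: inj_on_def)

lemma fst_phi_X:
  assumes k: "k > 0"
  shows "fst (phi k w) = real k powi lo w * of_int (Xv k w)"
proof -
  have "fst (phi k w) = (\<Sum>h\<in>Sw w. of_int (dig w h) * real k powi h)"
    using phi_dig[OF k, of "Sw w" w] Sw_cover by (simp add: Sw_def)
  also have "\<dots> = (\<Sum>j<Suc (Dw w). of_int (dig w (lo w + int j)) * real k powi (lo w + int j))"
    unfolding Sw_def by (subst sum.reindex[OF Sw_inj]) simp
  also have "\<dots> = (\<Sum>j<Suc (Dw w). real k powi lo w * (of_int (dig w (lo w + int j)) * real k ^ j))"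
    using k by (intro sum.cong) (simp_all add: power_int_add power_int_of_nat)
  also have "\<dots> = real k powi lo w * of_int (Xv k w)"
    by (simp add: Xv_def sum_distrib_left del: sum.lessThan_Suc)
  finally show ?thesis .
qed

lemma sum_abs_dig: "(\<Sum>j<Suc (Dw w). \<bar>dig w (lo w + int j)\<bar>) \<le> int (acount w)"
proof -
  have "(\<Sum>j<Suc (Dw w). \<bar>dig w (lo w + int j)\<bar>) = (\<Sum>h\<in>Sw w. \<bar>dig w h\<bar>)"
    unfolding Sw_def by (subst sum.reindex[OF Sw_inj]) simp
  also have "\<dots> \<le> int (acount w)" using dig_abs_sum[of "Sw w" w] Sw_cover by (simp add: Sw_def)
  finally show ?thesis .
qed

lemma Dw_le: "Dw w \<le> tcount w"
  using span[of w] by (simp add: Dw_def)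

lemma length_dw: "length (dw w) \<le> length w + 1"
proof -
  have "int (\<Sum>j<Suc (Dw w). nat \<bar>dig w (lo w + int j)\<bar>) = (\<Sum>j<Suc (Dw w). \<bar>dig w (lo w + int j)\<bar>)"
    by (simp add: of_nat_sum)
  then have "(\<Sum>j<Suc (Dw w). nat \<bar>dig w (lo w + int j)\<bar>) \<le> acount w" using sum_abs_dig[of w] by linarith
  moreover have "length (dw w) = (\<Sum>j<Suc (Dw w). nat \<bar>dig w (lo w + int j)\<bar> + 1)"
    unfolding dw_def by (rule length_blocks)
  ultimately show ?thesis using Dw_le[of w] length_at[of w]
    by (simp add: sum.distrib sum_Suc del: sum.lessThan_Suc)
qed

lemma abs_X:
  assumes k: "k > 0"
  shows "\<bar>Xv k w\<bar> \<le> int (length w) * int k ^ Dw w"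
proof -
  have "\<bar>Xv k w\<bar> \<le> (\<Sum>j<Suc (Dw w). \<bar>dig w (lo w + int j) * int k ^ j\<bar>)"
    unfolding Xv_def by (rule sum_abs)
  also have "\<dots> \<le> (\<Sum>j<Suc (Dw w). \<bar>dig w (lo w + int j)\<bar> * int k ^ Dw w)"
  proof (intro sum_mono)
    fix j assume "j \<in> {..<Suc (Dw w)}"
    then have "int k ^ j \<le> int k ^ Dw w" using k by (intro power_increasing) auto
    then show "\<bar>dig w (lo w + int j) * int k ^ j\<bar> \<le> \<bar>dig w (lo w + int j)\<bar> * int k ^ Dw w"
      by (simp add: abs_mult mult_left_mono)
  qed
  also have "\<dots> = (\<Sum>j<Suc (Dw w). \<bar>dig w (lo w + int j)\<bar>) * int k ^ Dw w" by (simp add: sum_distrib_right del: sum.lessThan_Suc)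
  also have "\<dots> \<le> int (acount w) * int k ^ Dw w" using sum_abs_dig[of w] by (intro mult_right_mono) auto
  also have "\<dots> \<le> int (length w) * int k ^ Dw w" using length_at[of w] by (intro mult_right_mono) auto
  finally show ?thesis .
qed

lemma lo_bound: "- int (length w) \<le> lo w"
  using span[of w] hi_ge0[of w] length_at[of w] by linarith

lemma Dw_le_len: "Dw w \<le> length w"
  using Dw_le[of w] length_at[of w] by linarith

lemma UNIV_gen: "(UNIV :: gen set) = {gen.GA, gen.GT}"
proof -
  have "x \<in> {gen.GA, gen.GT}" for x :: gen by (cases x) simp_all
  then show ?thesis by blast
qed

lemma finite_letter: "finite (UNIV :: letter set)"
proof -
  have "(UNIV :: letter set) = (UNIV :: gen set) \<times> (UNIV :: bool set)" by auto
  moreover have "finite ((UNIV :: gen set) \<times> (UNIV :: bool set))" by (simp add: UNIV_gen)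
  ultimately show ?thesis by simp
qed

lemma finite_len_eq: "finite {w :: word. length w = n}"
  using finite_lists_length_eq[OF finite_letter, of n] by simp

lemma finite_len_le: "finite {w :: word. length w \<le> n}"
  using finite_lists_length_le[OF finite_letter, of n] by simp

lemma min_len_le: "w \<in> S \<Longrightarrow> min_len S \<le> length w"
  unfolding min_len_def by (rule Least_le) blast

lemma min_len_ex: "S \<noteq> {} \<Longrightarrow> \<exists>w\<in>S. length w = min_len S"
  unfolding min_len_def by (rule LeastI_ex) blast

lemma elem_self: "k > 0 \<Longrightarrow> w \<in> bs_elem k w"
  by (simp add: elem_phi)

lemma elem_of: assumes k: "k > 0" and g: "g \<in> bs_elements k" and v: "v \<in> g" shows "g = bs_elem k v"
proof -
  obtain w0 where g0: "g = bs_elem k w0" using g by (auto simp: bs_elements_def)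
  then have "phi k v = phi k w0" using v elem_phi[OF k] by simp
  then show ?thesis using g0 elem_phi[OF k] by simp
qed

lemma class_of: assumes k: "k > 0" and C: "C \<in> bs_conj_classes k" and v: "v \<in> C" shows "C = bs_conj_class k v"
proof -
  obtain w0 where C0: "C = bs_conj_class k w0" using C by (auto simp: bs_conj_classes_def)
  then show ?thesis using class_eq[OF k, of v w0] v by simp
qed

definition Sn :: "nat \<Rightarrow> nat \<Rightarrow> word set set" where
  "Sn k n = {g \<in> bs_elements k. min_len g = n}"

definition Cn :: "nat \<Rightarrow> nat \<Rightarrow> word set set" where
  "Cn k n = {C \<in> bs_conj_classes k. min_len C = n}"

definition CL :: "nat \<Rightarrow> nat \<Rightarrow> word set set" where
  "CL k n = {C \<in> bs_conj_classes k. min_len C \<le> n}"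

lemma Sn_word: assumes k: "k > 0" and g: "g \<in> Sn k n"
  shows "\<exists>w. w \<in> g \<and> length w = n \<and> g = bs_elem k w"
proof -
  have ge: "g \<in> bs_elements k" and gl: "min_len g = n" using g by (auto simp: Sn_def)
  obtain w0 where "g = bs_elem k w0" using ge by (auto simp: bs_elements_def)
  then have "g \<noteq> {}" using elem_self[OF k, of w0] by blast
  then obtain w where w: "w \<in> g" "length w = n" using min_len_ex gl by blast
  then show ?thesis using elem_of[OF k ge w(1)] by blast
qed

lemma Sn_finite: assumes k: "k > 0" shows "finite (Sn k n)"
proof -
  have "Sn k n \<subseteq> bs_elem k ` {w. length w = n}"
  proof
    fix g assume "g \<in> Sn k n"
    then obtain w where "length w = n" "g = bs_elem k w" using Sn_word[OF k] by blast
    then show "g \<in> bs_elem k ` {w. length w = n}" by (intro image_eqI[of _ _ w]) simp_all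
  qed
  then show ?thesis by (rule finite_subset) (intro finite_imageI finite_len_eq)
qed

lemma CL_finite: assumes k: "k > 0" shows "finite (CL k n)"
proof -
  have "CL k n \<subseteq> bs_conj_class k ` {w. length w \<le> n}"
  proof
    fix C assume C: "C \<in> CL k n"
    then have Cc: "C \<in> bs_conj_classes k" and Cl: "min_len C \<le> n" by (auto simp: CL_def)
    obtain w0 where "C = bs_conj_class k w0" using Cc by (auto simp: bs_conj_classes_def)
    then have "C \<noteq> {}" using class_self[OF k, of w0] by blast
    then obtain w where w: "w \<in> C" "length w = min_len C" using min_len_ex by blast
    have "C = bs_conj_class k w" using class_of[OF k Cc w(1)] .
    then show "C \<in> bs_conj_class k ` {w. length w \<le> n}" using w(2) Cl
      by (intro image_eqI[of _ _ w]) simp_all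
  qed
  then show ?thesis by (rule finite_subset) (intro finite_imageI finite_len_le)
qed

lemma Cn_sub: "Cn k n \<subseteq> CL k n"
  by (auto simp: Cn_def CL_def)

lemma Cn_finite: "k > 0 \<Longrightarrow> finite (Cn k n)"
  by (rule finite_subset[OF Cn_sub CL_finite])

lemma conj_le_sphere: assumes k: "k > 0" shows "card (Cn k n) \<le> card (Sn k n)"
proof -
  define f where "f C = bs_elem k (SOME w. w \<in> C \<and> length w = n)" for C
  have wC: "(SOME w. w \<in> C \<and> length w = n) \<in> C \<and> length (SOME w. w \<in> C \<and> length w = n) = n"
    if "C \<in> Cn k n" for C
  proof -
    have Cc: "C \<in> bs_conj_classes k" and Cl: "min_len C = n" using that by (auto simp: Cn_def)
    obtain w0 where "C = bs_conj_class k w0" using Cc by (auto simp: bs_conj_classes_def)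
    then have "C \<noteq> {}" using class_self[OF k, of w0] by blast
    then have "\<exists>w. w \<in> C \<and> length w = n" using min_len_ex Cl by blast
    then show ?thesis by (rule someI_ex)
  qed
  have "inj_on f (Cn k n)"
  proof (rule inj_onI)
    fix C1 C2 assume C1: "C1 \<in> Cn k n" and C2: "C2 \<in> Cn k n" and eq: "f C1 = f C2"
    define w1 where "w1 = (SOME w. w \<in> C1 \<and> length w = n)"
    define w2 where "w2 = (SOME w. w \<in> C2 \<and> length w = n)"
    have w1: "w1 \<in> C1" and w2: "w2 \<in> C2" using wC[OF C1] wC[OF C2] by (simp_all add: w1_def w2_def)
    have "bs_elem k w1 = bs_elem k w2" using eq by (simp add: f_def w1_def w2_def)
    then have "w1 \<in> bs_elem k w2" using elem_self[OF k] by blast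
    have C2w: "C2 = bs_conj_class k w2" using class_of[OF k _ w2] C2 by (simp add: Cn_def)
    have "bs_elem k w2 \<subseteq> C2" using elem_sub_class[OF k class_self[OF k]] C2w by simp
    then have "w1 \<in> C2" using \<open>w1 \<in> bs_elem k w2\<close> by blast
    then show "C1 = C2" using class_of[OF k _ w1] class_of[OF k _ \<open>w1 \<in> C2\<close>] C1 C2
      by (simp add: Cn_def)
  qed
  moreover have "f ` Cn k n \<subseteq> Sn k n"
  proof
    fix g assume "g \<in> f ` Cn k n"
    then obtain C where C: "C \<in> Cn k n" and g: "g = f C" by blast
    define w where "w = (SOME w. w \<in> C \<and> length w = n)"
    have w: "w \<in> C" "length w = n" using wC[OF C] by (simp_all add: w_def)
    have Cc: "C \<in> bs_conj_classes k" and Cl: "min_len C = n" using C by (auto simp: Cn_def)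
    have gw: "g = bs_elem k w" by (simp add: g f_def w_def)
    have Cw: "C = bs_conj_class k w" using class_of[OF k Cc w(1)] .
    have sub: "bs_elem k w \<subseteq> C" using elem_sub_class[OF k class_self[OF k]] Cw by simp
    have "bs_elem k w \<noteq> {}" using elem_self[OF k] by blast
    then obtain v where v: "v \<in> bs_elem k w" "length v = min_len (bs_elem k w)" using min_len_ex by blast
    have "n \<le> length v" using min_len_le[of v C] sub v(1) Cl by auto
    moreover have "min_len (bs_elem k w) \<le> n" using min_len_le[OF elem_self[OF k], of w] w(2) by simp
    ultimately have "min_len (bs_elem k w) = n" using v(2) by linarith
    then show "g \<in> Sn k n" by (simp add: Sn_def gw bs_elements_def)
  qed
  ultimately show ?thesis by (rule card_inj_on_le[OF _ _ Sn_finite[OF k]])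
qed

lemma Cn_pos: assumes k: "k > 0" shows "1 \<le> card (Cn k n)"
proof -
  define w where "w = replicate n tL"
  define C where "C = bs_conj_class k w"
  have lw: "length w = n" by (simp add: w_def)
  have sw: "snd (phi k w) = int n" by (simp add: w_def phi_rep_tL)
  have "\<forall>v\<in>C. n \<le> length v"
  proof
    fix v assume "v \<in> C"
    then obtain u where "phi k v = conjp k (phi k u) (phi k w)" using class_phi[OF k] C_def by blast
    then have "snd (phi k v) = int n" using sw by (simp add: snd_conjp)
    then show "n \<le> length v" using abs_snd_phi[of k v] by simp
  qed
  moreover have "C \<noteq> {}" using class_self[OF k] C_def by blast
  ultimately have "n \<le> min_len C"
  proof -
    assume all: "\<forall>v\<in>C. n \<le> length v" and ne: "C \<noteq> {}"
    obtain v where "v \<in> C" "length v = min_len C" using min_len_ex[OF ne] by blast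
    then show ?thesis using all by auto
  qed
  moreover have "min_len C \<le> n" using min_len_le[of w C] class_self[OF k, of w] lw unfolding C_def by simp
  ultimately have "C \<in> Cn k n" by (simp add: Cn_def C_def bs_conj_classes_def)
  then have "Cn k n \<noteq> {}" by blast
  then have "0 < card (Cn k n)" using Cn_finite[OF k] card_gt_0_iff by blast
  then show ?thesis by simp
qed

lemma fst_conjp: "k > 0 \<Longrightarrow> fst (conjp k (z, l) (x, m)) = z + real k powi l * x - real k powi m * z"
  by (simp add: conjp_def amul_def ainv_def power_int_add power_int_minus field_simps)

lemma pow_mod_cycle:
  fixes k :: int
  shows "k ^ a mod (k ^ Suc D - 1) = k ^ (a mod Suc D) mod (k ^ Suc D - 1)"
proof -
  define M where "M = k ^ Suc D - 1"
  have k1: "k ^ Suc D mod M = 1 mod M" by (simp add: M_def mod_add_self2[of 1 "k ^ Suc D - 1", simplified])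
  have "k ^ a = (k ^ Suc D) ^ (a div Suc D) * k ^ (a mod Suc D)"
    by (metis power_add power_mult div_mult_mod_eq mult.commute)
  then have "k ^ a mod M = ((k ^ Suc D) ^ (a div Suc D) mod M) * k ^ (a mod Suc D) mod M"
    by (simp add: mod_mult_left_eq)
  also have "(k ^ Suc D) ^ (a div Suc D) mod M = ((k ^ Suc D mod M) ^ (a div Suc D)) mod M"
    by (simp add: power_mod)
  also have "\<dots> = ((1 mod M) ^ (a div Suc D)) mod M" by (simp only: k1)
  also have "\<dots> = 1 mod M" by (simp only: power_mod power_one)
  finally show ?thesis by (simp add: M_def mod_mult_left_eq)
qed

lemma congr_key:
  assumes k: "k \<ge> 2"
    and conj: "phi k v1 = conjp k (phi k u) (phi k v0)"
    and p1: "phi k v1 = (of_int X1, int D + 1)" and p0: "phi k v0 = (of_int X0, int D + 1)"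
  shows "\<exists>j\<le>D. X1 mod (int k ^ Suc D - 1) = (int k ^ j * X0) mod (int k ^ Suc D - 1)"
proof -
  have k0: "k > 0" using k by simp
  define K where "K = real k"
  have K0: "K > 0" using k0 by (simp add: K_def)
  define M where "M = int k ^ Suc D - 1"
  obtain e p l where u: "bs_eq k u (NF e p l)" using exists_NF by blast
  have pu: "phi k u = (of_int p / K ^ e, l)" using phi_bs_eq[OF u k0] phi_NF[OF k0] by (simp add: K_def)
  have "of_int X1 = fst (conjp k (of_int p / K ^ e, l) (of_int X0, int D + 1))"
    using conj p1 p0 pu unfolding K_def by (metis fst_conv)
  also have "\<dots> = of_int p / K ^ e + K powi l * of_int X0 - K powi (int D + 1) * (of_int p / K ^ e)"
    by (simp only: fst_conjp[OF k0] K_def)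
  finally have eq1: "of_int X1 = of_int p / K ^ e + K powi l * of_int X0 - K powi (int D + 1) * (of_int p / K ^ e)" .
  define F where "F = e + nat \<bar>l\<bar>"
  define N where "N = nat (int F + l)"
  have FN: "int N = int F + l" by (simp add: N_def F_def abs_if)
  have KDp: "K powi (int D + 1) = K ^ Suc D" by (simp add: power_int_add power_int_of_nat)
  have A: "K ^ F * (of_int p / K ^ e) = of_int p * K ^ (F - e)"
    using K0 by (simp add: F_def power_add)
  have B: "K ^ F * K powi l = K ^ N"
  proof -
    have "K ^ F * K powi l = K powi (int F) * K powi l" by (simp add: power_int_of_nat)
    also have "\<dots> = K powi (int F + l)" using K0 by (simp add: power_int_add)
    also have "\<dots> = K ^ N" by (simp add: FN[symmetric] power_int_of_nat)
    finally show ?thesis .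
  qed
  have "K ^ F * of_int X1 = K ^ F * (of_int p / K ^ e + K powi l * of_int X0 - K powi (int D + 1) * (of_int p / K ^ e))"
    using eq1 by simp
  also have "\<dots> = K ^ F * (of_int p / K ^ e + K powi l * of_int X0 - K ^ Suc D * (of_int p / K ^ e))"
    by (simp only: KDp)
  also have "\<dots> = K ^ F * (of_int p / K ^ e) + (K ^ F * K powi l) * of_int X0
                           - K ^ Suc D * (K ^ F * (of_int p / K ^ e))"
    by (simp only: ring_distribs mult_ac)
  also have "\<dots> = of_int p * K ^ (F - e) + K ^ N * of_int X0 - K ^ Suc D * (of_int p * K ^ (F - e))"
    by (simp only: A B)
  finally have "real_of_int (int k ^ F * X1) = real_of_int (int k ^ N * X0 - p * int k ^ (F - e) * M)"
    by (simp add: K_def M_def algebra_simps)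
  then have eqZ: "int k ^ F * X1 = int k ^ N * X0 - p * int k ^ (F - e) * M"
    by (simp only: of_int_eq_iff)
  have m1: "(int k ^ F * X1) mod M = (int k ^ N * X0) mod M"
    using eqZ by (simp add: mod_diff_right_eq[symmetric])
  have m2: "(int k ^ (D * F) * (int k ^ F * X1)) mod M = (int k ^ (D * F) * (int k ^ N * X0)) mod M"
    using m1 by (rule mod_mult_cong[OF refl])
  have e1: "int k ^ (D * F) * (int k ^ F * X1) = int k ^ (Suc D * F) * X1"
    by (simp add: power_add mult_ac)
  have "(int k ^ (D * F) * (int k ^ F * X1)) mod M = ((int k ^ (Suc D * F)) mod M * X1) mod M"
    by (simp only: e1 mod_mult_left_eq)
  also have "(int k ^ (Suc D * F)) mod M = 1 mod M"
  proof -
    have z: "(Suc D * F) mod Suc D = 0" by (rule mod_mult_self1_is_0)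
    show ?thesis using pow_mod_cycle[of "int k" "Suc D * F" D] unfolding z M_def by simp
  qed
  also have "(1 mod M * X1) mod M = X1 mod M" by (simp add: mod_mult_left_eq)
  finally have L: "(int k ^ (D * F) * (int k ^ F * X1)) mod M = X1 mod M" .
  define j where "j = (D * F + N) mod Suc D"
  have e2: "int k ^ (D * F) * (int k ^ N * X0) = int k ^ (D * F + N) * X0"
    by (simp add: power_add mult_ac)
  have "(int k ^ (D * F) * (int k ^ N * X0)) mod M = ((int k ^ (D * F + N)) mod M * X0) mod M"
    by (simp only: e2 mod_mult_left_eq)
  also have "(int k ^ (D * F + N)) mod M = int k ^ j mod M"
    using pow_mod_cycle[of "int k" "D * F + N" D] by (simp add: M_def j_def)
  also have "(int k ^ j mod M * X0) mod M = (int k ^ j * X0) mod M" by (simp add: mod_mult_left_eq)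
  finally have R: "(int k ^ (D * F) * (int k ^ N * X0)) mod M = (int k ^ j * X0) mod M" .
  have "j \<le> D" by (simp add: j_def less_Suc_eq_le)
  then show ?thesis using L R m2 by (auto simp: M_def)
qed

lemma count_residue:
  fixes M B r :: int
  assumes M: "M \<ge> 1" and B: "B \<le> int n * M"
  shows "card {X. \<bar>X\<bar> \<le> B \<and> X mod M = r} \<le> 2 * n + 1"
proof -
  let ?Y = "{X. \<bar>X\<bar> \<le> B \<and> X mod M = r}"
  have inj: "inj_on (\<lambda>X. X div M) ?Y"
  proof (rule inj_onI)
    fix X Y assume "X \<in> ?Y" "Y \<in> ?Y" "X div M = Y div M"
    then show "X = Y" by (metis (mono_tags, lifting) div_mult_mod_eq mem_Collect_eq)
  qed
  have sub: "(\<lambda>X. X div M) ` ?Y \<subseteq> {- int n..int n}"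
  proof
    fix Z assume "Z \<in> (\<lambda>X. X div M) ` ?Y"
    then obtain X where X: "\<bar>X\<bar> \<le> B" and Z: "Z = X div M" by blast
    have "- (int n * M) \<le> X" "X \<le> int n * M" using X B by linarith+
    then have "(- (int n * M)) div M \<le> X div M" "X div M \<le> (int n * M) div M"
      using M by (simp_all only: zdiv_mono1)
    moreover have "(- (int n * M)) div M = - int n"
    proof -
      have e: "- (int n * M) = (- int n) * M" by simp
      have "(- int n) * M div M = - int n" using M by (intro nonzero_mult_div_cancel_right) simp
      then show ?thesis by (simp only: e)
    qed
    moreover have "(int n * M) div M = int n" using M by simp
    ultimately show "Z \<in> {- int n..int n}" using Z by simp
  qed
  have "card ?Y = card ((\<lambda>X. X div M) ` ?Y)" using card_image[OF inj] by simp
  also have "\<dots> \<le> card {- int n..int n}" by (rule card_mono[OF _ sub]) simp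
  also have "\<dots> = 2 * n + 1" by simp
  finally show ?thesis .
qed

definition wg :: "nat \<Rightarrow> word set \<Rightarrow> word" where
  "wg n g = (SOME w. w \<in> g \<and> length w = n)"

lemma wg_prop: assumes k: "k > 0" and g: "g \<in> Sn k n"
  shows "wg n g \<in> g \<and> length (wg n g) = n \<and> g = bs_elem k (wg n g)"
proof -
  have "\<exists>w. w \<in> g \<and> length w = n" using Sn_word[OF k g] by blast
  then have w: "wg n g \<in> g \<and> length (wg n g) = n" unfolding wg_def by (rule someI_ex)
  have ge: "g \<in> bs_elements k" using g by (simp add: Sn_def)
  show ?thesis using w elem_of[OF k ge] by blast
qed

definition Phi :: "nat \<Rightarrow> nat \<Rightarrow> word set \<Rightarrow> word set" where
  "Phi k n g = bs_conj_class k (dw (wg n g))"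

definition tau :: "nat \<Rightarrow> nat \<Rightarrow> word set \<Rightarrow> int \<times> int \<times> nat \<times> int" where
  "tau k n g = (lo (wg n g), snd (phi k (wg n g)), Dw (wg n g), Xv k (wg n g))"

lemma tau_inj: assumes k: "k > 0" shows "inj_on (tau k n) (Sn k n)"
proof (rule inj_onI)
  fix g1 g2 assume g1: "g1 \<in> Sn k n" and g2: "g2 \<in> Sn k n" and eq: "tau k n g1 = tau k n g2"
  define w1 where "w1 = wg n g1"
  define w2 where "w2 = wg n g2"
  have e: "lo w1 = lo w2" "snd (phi k w1) = snd (phi k w2)" "Xv k w1 = Xv k w2"
    using eq by (simp_all add: tau_def w1_def w2_def)
  have "fst (phi k w1) = fst (phi k w2)" using fst_phi_X[OF k, of w1] fst_phi_X[OF k, of w2] e by simp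
  then have ph: "phi k w1 = phi k w2" using e(2) by (simp add: prod_eq_iff)
  have "g1 = bs_elem k w1" "g2 = bs_elem k w2" using wg_prop[OF k g1] wg_prop[OF k g2] by (simp_all add: w1_def w2_def)
  then show "g1 = g2" using ph elem_phi[OF k] by simp
qed

lemma Phi_CL: assumes k: "k > 0" and g: "g \<in> Sn k n" shows "Phi k n g \<in> CL k (Suc n)"
proof -
  define w where "w = wg n g"
  have lw: "length w = n" using wg_prop[OF k g] by (simp add: w_def)
  have "min_len (Phi k n g) \<le> length (dw w)"
    unfolding Phi_def w_def[symmetric] by (rule min_len_le[OF class_self[OF k]])
  also have "\<dots> \<le> Suc n" using length_dw[of w] lw by simp
  finally show ?thesis by (simp add: CL_def bs_conj_classes_def Phi_def)
qed

definition Bn :: "nat \<Rightarrow> nat" where "Bn n = (2 * n + 1) * (2 * n + 1) * ((n + 1) * ((n + 1) * (2 * n + 1)))"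

lemma XS_bound:
  assumes k: "k \<ge> 2" and Dn: "D \<le> n"
  shows "card ((\<lambda>g. Xv k (wg n g)) ` {g \<in> {g \<in> Sn k n. Phi k n g = C}. Dw (wg n g) = D}) \<le> (n + 1) * (2 * n + 1)"
    (is "card (?f ` ?G) \<le> _")
proof (cases "?G = {}")
  case True
  then have "?f ` ?G = {}" by blast
  then show ?thesis by (simp only: card.empty)
next
  case False
  have k0: "k > 0" using k by simp
  then obtain g0 where g0: "g0 \<in> ?G" using False by blast
  define w0 where "w0 = wg n g0"
  define X0 where "X0 = Xv k w0"
  define M where "M = int k ^ Suc D - 1"
  have kD: "int k ^ D \<le> M"
  proof -
    have "2 * int k ^ D \<le> int k * int k ^ D" using k by (intro mult_right_mono) auto
    moreover have "1 \<le> int k ^ D" using k by simp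
    ultimately show ?thesis by (simp add: M_def)
  qed
  have "1 \<le> int k ^ D" using k by simp
  then have M1: "1 \<le> M" using kD by linarith
  define Y where "Y j = {X. \<bar>X\<bar> \<le> int n * int k ^ D \<and> X mod M = (int k ^ j * X0) mod M}" for j
  have sub: "?f ` ?G \<subseteq> (\<Union>j\<in>{..D}. Y j)"
  proof
    fix X assume "X \<in> ?f ` ?G"
    then obtain g1 where g1: "g1 \<in> ?G" and X: "X = Xv k (wg n g1)" by blast
    define w1 where "w1 = wg n g1"
    have g1S: "g1 \<in> Sn k n" and g0S: "g0 \<in> Sn k n" using g1 g0 by auto
    have lw1: "length w1 = n" using wg_prop[OF k0 g1S] by (simp add: w1_def)
    have D1: "Dw w1 = D" and D0: "Dw w0 = D" using g1 g0 by (simp_all add: w1_def w0_def)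
    have "Phi k n g1 = C" "Phi k n g0 = C" using g1 g0 by auto
    then have cc: "bs_conj_class k (dw w1) = bs_conj_class k (dw w0)" by (simp add: Phi_def w1_def w0_def)
    have "dw w1 \<in> bs_conj_class k (dw w0)" using class_self[OF k0, of "dw w1"] cc by simp
    then obtain u where u: "phi k (dw w1) = conjp k (phi k u) (phi k (dw w0))" using class_phi[OF k0] by blast
    have p1: "phi k (dw w1) = (of_int (Xv k w1), int D + 1)" using phi_dw[OF k0, of w1] D1 by simp
    have p0: "phi k (dw w0) = (of_int X0, int D + 1)" using phi_dw[OF k0, of w0] D0 by (simp add: X0_def)
    obtain j where j: "j \<le> D" "Xv k w1 mod M = (int k ^ j * X0) mod M"
      using congr_key[OF k u p1 p0] by (auto simp: M_def)
    have "\<bar>Xv k w1\<bar> \<le> int n * int k ^ D" using abs_X[OF k0, of w1] lw1 D1 by simp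
    then show "X \<in> (\<Union>j\<in>{..D}. Y j)" using j X by (auto simp: Y_def w1_def)
  qed
  have fin: "finite (\<Union>j\<in>{..D}. Y j)"
  proof -
    have "(\<Union>j\<in>{..D}. Y j) \<subseteq> {- (int n * int k ^ D)..int n * int k ^ D}" by (auto simp: Y_def)
    then show ?thesis by (rule finite_subset) simp
  qed
  have "card (?f ` ?G) \<le> card (\<Union>j\<in>{..D}. Y j)" by (rule card_mono[OF fin sub])
  also have "\<dots> \<le> (\<Sum>j\<in>{..D}. card (Y j))" by (rule card_UN_le) simp
  also have "\<dots> \<le> (\<Sum>j\<in>{..D}. 2 * n + 1)"
  proof (rule sum_mono)
    fix j assume "j \<in> {..D}"
    have "int n * int k ^ D \<le> int n * M" using kD by (intro mult_left_mono) auto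
    then show "card (Y j) \<le> 2 * n + 1" unfolding Y_def by (rule count_residue[OF M1])
  qed
  also have "\<dots> = (D + 1) * (2 * n + 1)" by simp
  also have "\<dots> \<le> (n + 1) * (2 * n + 1)" using Dn by (intro mult_le_mono1) simp
  finally show ?thesis .
qed

lemma fiber_card:
  assumes k: "k \<ge> 2"
  shows "card {g \<in> Sn k n. Phi k n g = C} \<le> Bn n"
proof -
  have k0: "k > 0" using k by simp
  define F where "F = {g \<in> Sn k n. Phi k n g = C}"
  define XS where "XS D = (\<lambda>g. Xv k (wg n g)) ` {g \<in> F. Dw (wg n g) = D}" for D
  have Ffin: "finite F" using Sn_finite[OF k0] by (simp add: F_def)
  have XSfin: "finite (XS D)" for D using Ffin by (simp add: XS_def)
  define T where "T = {- int n..int n} \<times> {- int n..int n} \<times> (SIGMA D:{..n}. XS D)"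
  have sub: "tau k n ` F \<subseteq> T"
  proof
    fix t assume "t \<in> tau k n ` F"
    then obtain g where g: "g \<in> F" and t: "t = tau k n g" by blast
    define w where "w = wg n g"
    have gS: "g \<in> Sn k n" using g by (simp add: F_def)
    have lw: "length w = n" using wg_prop[OF k0 gS] by (simp add: w_def)
    have "- int n \<le> lo w" using lo_bound[of w] lw by simp
    moreover have "lo w \<le> int n" using lo_le0[of w] by simp
    moreover have "\<bar>snd (phi k w)\<bar> \<le> int n" using abs_snd_phi[of k w] lw by simp
    moreover have "Dw w \<le> n" using Dw_le_len[of w] lw by simp
    moreover have "Xv k w \<in> XS (Dw w)" using g by (auto simp: XS_def w_def)
    ultimately have "(lo w, snd (phi k w), Dw w, Xv k w) \<in> T" unfolding T_def by auto
    then show "t \<in> T" by (simp add: t tau_def w_def)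
  qed
  have c1: "card F = card (tau k n ` F)"
    using card_image[OF inj_on_subset[OF tau_inj[OF k0]], of F] by (auto simp: F_def)
  have c2: "card (tau k n ` F) \<le> card T" by (rule card_mono[OF _ sub]) (simp add: T_def XSfin)
  have cn: "card {- int n..int n} = 2 * n + 1" by simp
  have c3: "card T = (2 * n + 1) * ((2 * n + 1) * (\<Sum>D\<le>n. card (XS D)))"
  proof -
    have cs: "card (Sigma {..n} XS) = (\<Sum>D\<le>n. card (XS D))" by (rule card_SigmaI) (simp_all add: XSfin)
    show ?thesis unfolding T_def by (simp only: card_cartesian_product cs cn)
  qed
  have c4: "(\<Sum>D\<le>n. card (XS D)) \<le> (\<Sum>D\<le>n. (n + 1) * (2 * n + 1))"
    by (rule sum_mono) (use XS_bound[OF k] in \<open>simp add: XS_def F_def\<close>)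
  have c5: "(\<Sum>D\<le>n. (n + 1) * (2 * n + 1)) = (n + 1) * ((n + 1) * (2 * n + 1))" by simp
  have "card F \<le> (2 * n + 1) * ((2 * n + 1) * ((n + 1) * ((n + 1) * (2 * n + 1))))"
  proof -
    have "(2 * n + 1) * ((2 * n + 1) * (\<Sum>D\<le>n. card (XS D)))
        \<le> (2 * n + 1) * ((2 * n + 1) * ((n + 1) * ((n + 1) * (2 * n + 1))))"
      using c4 c5 by (intro mult_le_mono2) simp
    then show ?thesis using c1 c2 c3 by linarith
  qed
  then show ?thesis unfolding F_def Bn_def by (simp only: mult.assoc)
qed

lemma sphere_le: assumes k: "k \<ge> 2" shows "card (Sn k n) \<le> card (CL k (Suc n)) * Bn n"
proof -
  have k0: "k > 0" using k by simp
  have eq: "Sn k n = (\<Union>C\<in>CL k (Suc n). {g \<in> Sn k n. Phi k n g = C})"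
    using Phi_CL[OF k0] by blast
  have "card (Sn k n) \<le> (\<Sum>C\<in>CL k (Suc n). card {g \<in> Sn k n. Phi k n g = C})"
    by (subst eq) (rule card_UN_le[OF CL_finite[OF k0]])
  also have "\<dots> \<le> (\<Sum>C\<in>CL k (Suc n). Bn n)" by (rule sum_mono) (rule fiber_card[OF k])
  also have "\<dots> = card (CL k (Suc n)) * Bn n" by simp
  finally show ?thesis .
qed

lemma CL_le: "card (CL k N) \<le> (\<Sum>j\<le>N. card (Cn k j))"
proof -
  have "CL k N = (\<Union>j\<in>{..N}. Cn k j)" by (auto simp: CL_def Cn_def)
  then show ?thesis using card_UN_le[of "{..N}" "Cn k"] by simp
qed

lemma sphere_le2: assumes k: "k \<ge> 2"
  shows "sphere_count k n \<le> Bn n * (\<Sum>j\<le>Suc n. conj_count k j)"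
proof -
  have "sphere_count k n = card (Sn k n)" by (simp add: sphere_count_def Sn_def)
  also have "\<dots> \<le> card (CL k (Suc n)) * Bn n" by (rule sphere_le[OF k])
  also have "\<dots> \<le> (\<Sum>j\<le>Suc n. card (Cn k j)) * Bn n" by (intro mult_right_mono CL_le) simp
  finally show ?thesis by (simp add: conj_count_def Cn_def mult.commute)
qed

lemma conj_le2: "k > 0 \<Longrightarrow> conj_count k n \<le> sphere_count k n"
  using conj_le_sphere[of k n] by (simp add: conj_count_def Cn_def sphere_count_def Sn_def)

lemma conj_pos2: "k > 0 \<Longrightarrow> 1 \<le> conj_count k n"
  using Cn_pos[of k n] by (simp add: conj_count_def Cn_def)

lemma lim_aux:
  fixes c r :: real
  assumes c: "c > 0" and r: "r > 0"
  shows "(\<lambda>n. exp ((ln c + ln (real (Bn n) * (real n + 2)) + real (Suc n) * ln r) / real n)) \<longlonglongrightarrow> r"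
proof -
  have P: "(\<lambda>n::nat. ln (real (Bn n) * (real n + 2)) / real n) \<longlonglongrightarrow> 0"
  proof -
    have "(\<lambda>n::nat. ln ((2 * real n + 1) * (2 * real n + 1) * ((real n + 1) * ((real n + 1) * (2 * real n + 1))) * (real n + 2)) / real n) \<longlonglongrightarrow> 0"
      by real_asymp
    moreover have eqB: "real (Bn n) = (2 * real n + 1) * (2 * real n + 1) * ((real n + 1) * ((real n + 1) * (2 * real n + 1)))" for n
      unfolding Bn_def by (simp only: of_nat_mult of_nat_add of_nat_1 of_nat_numeral)
    ultimately show ?thesis by (simp only: eqB)
  qed
  have C: "(\<lambda>n::nat. ln c / real n) \<longlonglongrightarrow> 0" by real_asymp
  have R: "(\<lambda>n::nat. real (Suc n) * ln r / real n) \<longlonglongrightarrow> ln r" by real_asymp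
  have "(\<lambda>n. ln c / real n + ln (real (Bn n) * (real n + 2)) / real n + real (Suc n) * ln r / real n) \<longlonglongrightarrow> 0 + 0 + ln r"
    by (intro tendsto_add C P R)
  then have "(\<lambda>n. (ln c + ln (real (Bn n) * (real n + 2)) + real (Suc n) * ln r) / real n) \<longlonglongrightarrow> ln r"
    by (simp add: add_divide_distrib)
  then have "(\<lambda>n. exp ((ln c + ln (real (Bn n) * (real n + 2)) + real (Suc n) * ln r) / real n)) \<longlonglongrightarrow> exp (ln r)"
    by (rule tendsto_exp)
  then show ?thesis using r by simp
qed

lemma rate_mono:
  assumes "\<And>n. a n \<le> b n"
  shows "growth_rate a \<le> growth_rate b"
  unfolding growth_rate_def
proof (rule Limsup_mono[OF always_eventually], rule allI)
  fix n
  show "ereal (root n (real (a n))) \<le> ereal (root n (real (b n)))"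
  proof (cases "n = 0")
    case True then show ?thesis by simp
  next
    case False then show ?thesis using assms[of n] by simp
  qed
qed

lemma partial_sum_bound:
  fixes a :: "nat \<Rightarrow> nat" and r :: real
  assumes r: "r \<ge> 1" and big: "\<And>j. j \<ge> N1 \<Longrightarrow> real (a j) \<le> r ^ j"
  shows "(\<Sum>j\<le>m. real (a j)) \<le> (\<Sum>j<N1. real (a j)) + real (Suc m) * r ^ m"
proof -
  have "(\<Sum>j\<le>m. real (a j)) \<le> (\<Sum>j\<le>m. (if j < N1 then real (a j) else 0) + r ^ j)"
  proof (rule sum_mono)
    fix j assume "j \<in> {..m}"
    have "0 \<le> r ^ j" using r by simp
    then show "real (a j) \<le> (if j < N1 then real (a j) else 0) + r ^ j" using big[of j] by auto
  qed
  also have "\<dots> = (\<Sum>j\<le>m. (if j < N1 then real (a j) else 0)) + (\<Sum>j\<le>m. r ^ j)"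
    by (simp add: sum.distrib)
  also have "(\<Sum>j\<le>m. (if j < N1 then real (a j) else 0)) = (\<Sum>j\<in>{..m} \<inter> {..<N1}. real (a j))"
    by (simp add: sum.inter_restrict)
  also have "\<dots> \<le> (\<Sum>j<N1. real (a j))" by (rule sum_mono2) auto
  also have "(\<Sum>j\<le>m. r ^ j) \<le> (\<Sum>j\<le>m. r ^ m)"
    by (rule sum_mono) (use r in \<open>auto intro: power_increasing\<close>)
  also have "\<dots> = real (Suc m) * r ^ m" by simp
  finally show ?thesis by simp
qed

lemma rate_le:
  fixes a b :: "nat \<Rightarrow> nat"
  assumes apos: "\<And>n. 1 \<le> a n" and bnd: "\<And>n. b n \<le> Bn n * (\<Sum>j\<le>Suc n. a j)"
  shows "growth_rate b \<le> growth_rate a"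
proof (rule dense_ge)
  fix x assume x: "growth_rate a < x"
  have rho1: "1 \<le> growth_rate a"
    unfolding growth_rate_def
  proof (rule le_Limsup)
    show "sequentially \<noteq> bot" by simp
    show "\<forall>\<^sub>F n in sequentially. 1 \<le> ereal (root n (real (a n)))"
    proof (rule eventually_sequentiallyI[of 1])
      fix n :: nat assume "1 \<le> n"
      then show "1 \<le> ereal (root n (real (a n)))" using apos[of n] by simp
    qed
  qed
  show "growth_rate b \<le> x"
  proof (cases x)
    case PInf then show ?thesis by simp
  next
    case MInf then show ?thesis using x by simp
  next
    case (real r)
    have "(1::ereal) < ereal r" using rho1 x real by (metis order_le_less_trans)
    then have r1: "1 < r" by simp
    have "\<forall>\<^sub>F n in sequentially. ereal (root n (real (a n))) < ereal r"
      using Limsup_lessD[where y="ereal r" and F=sequentially and f="\<lambda>n. ereal (root n (real (a n)))"] x real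
      by (simp add: growth_rate_def)
    then obtain N0 where N0: "\<And>n. n \<ge> N0 \<Longrightarrow> root n (real (a n)) < r"
      by (auto simp: eventually_sequentially)
    define N1 where "N1 = max N0 1"
    have big: "real (a j) \<le> r ^ j" if "j \<ge> N1" for j
    proof -
      have j0: "0 < j" and "j \<ge> N0" using that by (auto simp: N1_def)
      then have lt: "root j (real (a j)) < r" using N0 by simp
      have "real (a j) = root j (real (a j)) ^ j" using j0 by (simp add: real_root_pow_pos2)
      also have "\<dots> \<le> r ^ j" using lt j0 by (intro power_mono) auto
      finally show ?thesis .
    qed
    define A where "A = (\<Sum>j<N1. real (a j))"
    have A0: "0 \<le> A" by (simp add: A_def sum_nonneg)
    define c where "c = A + 1"
    have c0: "c > 0" using A0 by (simp add: c_def)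
    define g where "g n = exp ((ln c + ln (real (Bn n) * (real n + 2)) + real (Suc n) * ln r) / real n)" for n
    have bn: "real (b n) \<le> c * (real (Bn n) * (real n + 2)) * r ^ Suc n" for n
    proof -
      have ps: "(\<Sum>j\<le>Suc n. real (a j)) \<le> A + real (Suc (Suc n)) * r ^ Suc n"
        using partial_sum_bound[of r N1 a "Suc n"] r1 big by (simp add: A_def)
      have h1: "1 \<le> r ^ Suc n" using r1 by (intro one_le_power) simp
      have h2: "1 \<le> real (Suc (Suc n))" by simp
      have one: "1 \<le> real (Suc (Suc n)) * r ^ Suc n" using mult_mono[OF h2 h1] by simp
      have AQ: "A * 1 \<le> A * (real (Suc (Suc n)) * r ^ Suc n)" by (rule mult_left_mono[OF one A0])
      have "A + real (Suc (Suc n)) * r ^ Suc n \<le> c * (real (Suc (Suc n)) * r ^ Suc n)"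
        using AQ unfolding c_def by (simp add: distrib_right)
      then have s: "(\<Sum>j\<le>Suc n. real (a j)) \<le> c * (real (n + 2) * r ^ Suc n)" using ps by simp
      have "real (b n) \<le> real (Bn n) * (\<Sum>j\<le>Suc n. real (a j))"
        using bnd[of n] by (metis of_nat_le_iff of_nat_mult of_nat_sum)
      also have "\<dots> \<le> real (Bn n) * (c * (real (n + 2) * r ^ Suc n))" using s by (intro mult_left_mono) auto
      finally show ?thesis by (simp add: algebra_simps)
    qed
    have ev: "\<forall>\<^sub>F n in sequentially. ereal (root n (real (b n))) \<le> ereal (g n)"
    proof (rule eventually_sequentiallyI[of 1])
      fix n :: nat assume n1: "1 \<le> n"
      show "ereal (root n (real (b n))) \<le> ereal (g n)"
      proof (cases "b n = 0")
        case True then show ?thesis by (simp add: g_def)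
      next
        case False
        have bpos: "0 < real (b n)" using False by simp
        have "0 < Bn n" unfolding Bn_def by simp
        then have Ppos: "0 < real (Bn n) * (real n + 2)" by (intro mult_pos_pos) simp_all
        have "ln (real (b n)) \<le> ln (c * (real (Bn n) * (real n + 2)) * r ^ Suc n)"
          using bn[of n] bpos by simp
        also have "\<dots> = ln c + ln (real (Bn n) * (real n + 2)) + real (Suc n) * ln r"
        proof -
          have r0: "0 < r" using r1 by simp
          have "ln (c * (real (Bn n) * (real n + 2)) * r ^ Suc n) = ln (c * (real (Bn n) * (real n + 2))) + ln (r ^ Suc n)"
            using c0 Ppos r0 by (intro ln_mult_pos) simp_all
          also have "ln (c * (real (Bn n) * (real n + 2))) = ln c + ln (real (Bn n) * (real n + 2))"
            using c0 Ppos by (intro ln_mult_pos) simp_all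
          also have "ln (r ^ Suc n) = real (Suc n) * ln r" by (rule ln_realpow)
          finally show ?thesis .
        qed
        finally have le: "ln (real (b n)) / real n \<le> (ln c + ln (real (Bn n) * (real n + 2)) + real (Suc n) * ln r) / real n"
          using n1 by (intro divide_right_mono) auto
        have "root n (real (b n)) = exp (ln (root n (real (b n))))" using bpos n1 by simp
        also have "\<dots> = exp (ln (real (b n)) / real n)" using bpos n1 by (simp add: ln_root)
        also have "\<dots> \<le> g n" unfolding g_def using le by simp
        finally show ?thesis by simp
      qed
    qed
    have lim: "(\<lambda>n. ereal (g n)) \<longlonglongrightarrow> ereal r"
      unfolding g_def using lim_aux[OF c0] r1 by (intro tendsto_ereal) simp
    have "growth_rate b \<le> limsup (\<lambda>n. ereal (g n))"
      unfolding growth_rate_def by (rule Limsup_mono[OF ev])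
    also have "\<dots> = ereal r" by (rule lim_imp_Limsup[OF _ lim]) simp
    finally show ?thesis using real by simp
  qed
qed

theorem corollary5p3:
  fixes k :: nat
  assumes "k \<ge> 2"
  shows "growth_rate (conj_count k) = growth_rate (sphere_count k)"
proof (rule antisym)
  have k0: "k > 0" using assms by simp
  show "growth_rate (conj_count k) \<le> growth_rate (sphere_count k)"
    by (rule rate_mono) (rule conj_le2[OF k0])
  show "growth_rate (sphere_count k) \<le> growth_rate (conj_count k)"
    by (rule rate_le) (rule conj_pos2[OF k0], rule sphere_le2[OF assms])
qed

end
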